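(* Let $G$ be a locally compact abelian group acting continuously on a compact metric space $(X,d)$. Then complete proximality $\sim_{cp}$ is an equivalence relation on $X$.
   Context: Let $\mathcal A$ be the collection of subsets $A\subset G$ which contain a translate of every compact subset of $G$. Points $x,y\in X$ are proximal in $A$ if $\inf_{t\in A}d(t\cdot x,t\cdot y)=0$, and completely proximal, $x\sim_{cp}y$, if they are proximal in every $A\in\mathcal A$. *)

theory Defs
  imports "HOL-Analysis.Analysis"
begin

definition continuous_action :: "('g::topological_ab_group_add \<Rightarrow> 'x::metric_space \<Rightarrow> 'x) \<Rightarrow> 'x set \<Rightarrow> bool" where
  "continuous_action act X \<longleftrightarrow>
     (\<forall>t x. x \<in> X \<longrightarrow> act t x \<in> X) \<and>
     (\<forall>x\<in>X. act 0 x = x) \<and>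
     (\<forall>s t x. x \<in> X \<longrightarrow> act (s + t) x = act s (act t x)) \<and>
     continuous_on (UNIV \<times> X) (\<lambda>(t, x). act t x)"

definition thick_sets :: "'g::topological_ab_group_add set set" where
  "thick_sets = {A. \<forall>K. compact K \<longrightarrow> (\<exists>g. (\<lambda>k. g + k) ` K \<subseteq> A)}"

definition proximal_in :: "('g \<Rightarrow> 'x::metric_space \<Rightarrow> 'x) \<Rightarrow> 'g set \<Rightarrow> 'x \<Rightarrow> 'x \<Rightarrow> bool" where
  "proximal_in act A x y \<longleftrightarrow> (INF t\<in>A. dist (act t x) (act t y)) = 0"

definition completely_proximal :: "('g::topological_ab_group_add \<Rightarrow> 'x::metric_space \<Rightarrow> 'x) \<Rightarrow> 'x \<Rightarrow> 'x \<Rightarrow> bool" where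
  "completely_proximal act x y \<longleftrightarrow> (\<forall>A\<in>thick_sets. proximal_in act A x y)"

end

theory Submission
  imports Defs
begin

lemma thick_nonempty: "A \<in> thick_sets \<Longrightarrow> A \<noteq> {}"
proof -
  assume "A \<in> thick_sets"
  then obtain g where "(\<lambda>k. g + k) ` {0} \<subseteq> A"
    unfolding thick_sets_def using compact_sing by blast
  then show "A \<noteq> {}" by auto
qed

lemma prox_iff:
  assumes "A \<noteq> {}"
  shows "proximal_in act A x y \<longleftrightarrow> (\<forall>e>0. \<exists>t\<in>A. dist (act t x) (act t y) < e)"
proof -
  have bdd: "bdd_below ((\<lambda>t. dist (act t x) (act t y)) ` A)"
    by (rule bdd_belowI[of _ 0]) auto
  have ge: "0 \<le> (INF t\<in>A. dist (act t x) (act t y))"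
    using assms by (intro cINF_greatest) auto
  show ?thesis
  proof
    assume "proximal_in act A x y"
    then have z: "(INF t\<in>A. dist (act t x) (act t y)) = 0" by (simp add: proximal_in_def)
    show "\<forall>e>0. \<exists>t\<in>A. dist (act t x) (act t y) < e"
      using cINF_less_iff[OF assms bdd] z by auto
  next
    assume h: "\<forall>e>0. \<exists>t\<in>A. dist (act t x) (act t y) < e"
    have "(INF t\<in>A. dist (act t x) (act t y)) \<le> 0"
    proof (rule field_le_epsilon)
      fix e :: real assume "0 < e"
      then obtain t where "t \<in> A" "dist (act t x) (act t y) < e" using h by auto
      then have "(INF t\<in>A. dist (act t x) (act t y)) \<le> dist (act t x) (act t y)"
        using bdd by (intro cINF_lower) auto
      then show "(INF t\<in>A. dist (act t x) (act t y)) \<le> 0 + e"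
        using \<open>dist (act t x) (act t y) < e\<close> by simp
    qed
    with ge show "proximal_in act A x y" by (simp add: proximal_in_def)
  qed
qed

lemma thick_shift:
  fixes A :: "'g::topological_ab_group_add set"
  assumes "A \<in> thick_sets" "compact L"
  shows "{s. (\<lambda>l. s + l) ` L \<subseteq> A} \<in> thick_sets"
  unfolding thick_sets_def
proof (clarify)
  fix M :: "'g set" assume "compact M"
  have "compact ((\<lambda>p. fst p + snd p) ` (M \<times> L))"
    by (intro compact_continuous_image compact_Times \<open>compact M\<close> assms(2) continuous_intros)
  then obtain g where g: "(\<lambda>k. g + k) ` ((\<lambda>p. fst p + snd p) ` (M \<times> L)) \<subseteq> A"
    using assms(1) unfolding thick_sets_def by blast
  show "\<exists>g. (\<lambda>k. g + k) ` M \<subseteq> {s. (\<lambda>l. s + l) ` L \<subseteq> A}"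
  proof (intro exI subsetI)
    fix s assume "s \<in> (\<lambda>k. g + k) ` M"
    then obtain m where m: "m \<in> M" "s = g + m" by auto
    have "(\<lambda>l. s + l) ` L \<subseteq> A"
    proof
      fix a assume "a \<in> (\<lambda>l. s + l) ` L"
      then obtain l where l: "l \<in> L" "a = s + l" by auto
      have "g + (fst (m, l) + snd (m, l)) \<in> A" using g m l by blast
      then show "a \<in> A" using l m by (simp add: add.assoc)
    qed
    then show "s \<in> {s. (\<lambda>l. s + l) ` L \<subseteq> A}" by simp
  qed
qed

lemma unif:
  fixes act :: "'g::topological_ab_group_add \<Rightarrow> 'x::metric_space \<Rightarrow> 'x"
  assumes ca: "continuous_action act X" and X: "compact X" and L: "compact L" and e: "0 < e"
  obtains d where "0 < d" "\<And>l u v. l \<in> L \<Longrightarrow> u \<in> X \<Longrightarrow> v \<in> X \<Longrightarrow> dist u v < d \<Longrightarrow> dist (act l u) (act l v) < e"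
proof -
  have c0: "continuous_on (UNIV \<times> X) (\<lambda>(t, x). act t x)" using ca by (simp add: continuous_action_def)
  have c1: "continuous_on (X \<times> L) (\<lambda>p. act (snd p) (fst p))"
  proof -
    have "continuous_on (X \<times> L) ((\<lambda>(t, x). act t x) \<circ> (\<lambda>p. (snd p, fst p)))"
      by (rule continuous_on_compose[OF continuous_on_Pair[OF continuous_on_snd[OF continuous_on_id] continuous_on_fst[OF continuous_on_id]]])
         (rule continuous_on_subset[OF c0], auto)
    then show ?thesis by (simp add: o_def)
  qed
  have pt: "\<exists>d>0. \<forall>f\<in>(\<lambda>l. act l) ` L. \<forall>x'\<in>X. dist x' x < d \<longrightarrow> dist (f x') (f x) < \<epsilon>"
    if "x \<in> X" "0 < \<epsilon>" for x \<epsilon>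
  proof -
    have "\<epsilon>/2 > 0" using that by simp
    from continuous_on_prod_compactE[OF c1 L that(1) this]
    obtain X0 where X0: "x \<in> X0" "open X0"
      "\<forall>x'\<in>X0 \<inter> X. \<forall>t\<in>L. dist (act (snd (x', t)) (fst (x', t))) (act (snd (x, t)) (fst (x, t))) \<le> \<epsilon>/2"
      by blast
    obtain d where d: "d > 0" "ball x d \<subseteq> X0" using X0 open_contains_ball by blast
    show ?thesis
    proof (intro exI conjI ballI impI)
      fix f x' assume "f \<in> (\<lambda>l. act l) ` L" "x' \<in> X" "dist x' x < d"
      then obtain l where "l \<in> L" "f = act l" by auto
      moreover have "x' \<in> X0" using d \<open>dist x' x < d\<close> by (auto simp: dist_commute)
      ultimately have "dist (f x') (f x) \<le> \<epsilon>/2" using X0(3) \<open>x' \<in> X\<close> by simp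
      then show "dist (f x') (f x) < \<epsilon>" using that by simp
    qed (fact d)
  qed
  from compact_uniformly_equicontinuous[OF X, of "(\<lambda>l. act l) ` L", OF pt e]
  obtain d where "0 < d" "\<And>f x x'. f \<in> (\<lambda>l. act l) ` L \<Longrightarrow> x \<in> X \<Longrightarrow> x' \<in> X \<Longrightarrow> dist x' x < d \<Longrightarrow> dist (f x') (f x) < e"
    by blast
  then show ?thesis using that by blast
qed

theorem mainTheorem17:
  fixes act :: "'g::{topological_ab_group_add, t2_space} \<Rightarrow> 'x::metric_space \<Rightarrow> 'x"
    and X :: "'x set"
  assumes "locally_compact_space (euclidean :: 'g topology)"
    and "compact X"
    and "continuous_action act X"
  shows "equiv X {(x, y). x \<in> X \<and> y \<in> X \<and> completely_proximal act x y}"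
proof -
  have inX: "\<And>t x. x \<in> X \<Longrightarrow> act t x \<in> X" and comp: "\<And>s t x. x \<in> X \<Longrightarrow> act (s + t) x = act s (act t x)"
    using assms(3) by (auto simp: continuous_action_def)
  have trans: "completely_proximal act x z"
    if xy: "completely_proximal act x y" and yz: "completely_proximal act y z"
      and X: "x \<in> X" "y \<in> X" "z \<in> X" for x y z
    unfolding completely_proximal_def
  proof
    fix A :: "'g set" assume A: "A \<in> thick_sets"
    show "proximal_in act A x z"
      unfolding prox_iff[OF thick_nonempty[OF A]]
    proof (intro allI impI)
      fix e :: real assume e: "0 < e"
      define B where "B = {t\<in>A. dist (act t x) (act t y) < e/2}"
      have Bt: "B \<in> thick_sets"
        unfolding thick_sets_def
      proof clarify
        fix L :: "'g set" assume L: "compact L"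
        obtain d where d: "0 < d" "\<And>l u v. l \<in> L \<Longrightarrow> u \<in> X \<Longrightarrow> v \<in> X \<Longrightarrow> dist u v < d \<Longrightarrow> dist (act l u) (act l v) < e/2"
          using unif[OF assms(3) assms(2) L, of "e/2"] e by auto
        have A': "{s. (\<lambda>l. s + l) ` L \<subseteq> A} \<in> thick_sets" by (rule thick_shift[OF A L])
        then obtain s where s: "(\<lambda>l. s + l) ` L \<subseteq> A" "dist (act s x) (act s y) < d"
        proof -
          have "proximal_in act {s. (\<lambda>l. s + l) ` L \<subseteq> A} x y"
            using xy A' unfolding completely_proximal_def by blast
          then show ?thesis using that d(1) unfolding prox_iff[OF thick_nonempty[OF A']] by blast
        qed
        show "\<exists>g. (\<lambda>k. g + k) ` L \<subseteq> B"
        proof (intro exI subsetI)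
          fix a assume "a \<in> (\<lambda>l. s + l) ` L"
          then obtain l where l: "l \<in> L" "a = s + l" by auto
          have "a \<in> A" using s(1) l by auto
          moreover have "act a x = act l (act s x)" "act a y = act l (act s y)"
            using comp X l by (simp_all add: add.commute)
          moreover have "dist (act l (act s x)) (act l (act s y)) < e/2"
            using d(2)[OF l(1) inX inX s(2)] X by simp
          ultimately show "a \<in> B" by (simp add: B_def)
        qed
      qed
      obtain t where t: "t \<in> B" "dist (act t y) (act t z) < e/2"
      proof -
        have "proximal_in act B y z" using yz Bt unfolding completely_proximal_def by blast
        then show ?thesis using that e unfolding prox_iff[OF thick_nonempty[OF Bt]] by (meson half_gt_zero)
      qed
      have "dist (act t x) (act t z) \<le> dist (act t x) (act t y) + dist (act t y) (act t z)"
        by (rule dist_triangle)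
      with t show "\<exists>t\<in>A. dist (act t x) (act t z) < e"
        by (intro bexI[of _ t]) (auto simp: B_def)
    qed
  qed
  have refl: "completely_proximal act x x" for x
    unfolding completely_proximal_def
    using thick_nonempty by (auto simp: prox_iff[OF thick_nonempty])
  have sym: "completely_proximal act y x" if "completely_proximal act x y" for x y
    using that unfolding completely_proximal_def
    by (auto simp: prox_iff[OF thick_nonempty] dist_commute)
  show ?thesis
  proof (rule equivI)
    show "refl_on X {(x, y). x \<in> X \<and> y \<in> X \<and> completely_proximal act x y}"
      unfolding refl_on_def using refl by auto
    show "sym {(x, y). x \<in> X \<and> y \<in> X \<and> completely_proximal act x y}"
      unfolding sym_def using sym by auto
    show "Relation.trans {(x, y). x \<in> X \<and> y \<in> X \<and> completely_proximal act x y}"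
      unfolding trans_def using trans by auto
  qed auto
qed

end
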